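(* Let $u\in\mathcal H_k$, let $\Lambda\subset\mathcal H_k'$ satisfy $\sup_{\lambda\in\Lambda}\|v_\lambda\|_{\mathcal H_k}\le1$, and let $\lambda_1,\lambda_2,\dots$ be selected from $\Lambda$ by a PDE-$\beta$-greedy algorithm applied to $u$, with $r_i:=u-\Pi_{V(\Lambda_i)}(u)$. Then for $n=1,2,\dots$: (a) if $\beta\in[0,1]$: $$\Big[\prod_{i=n+1}^{2n}\sup_{\lambda\in\Lambda}|\lambda(r_i)|\Big]^{1/n}\le n^{-\beta/2}\,\|r_{n+1}\|_{\mathcal H_k}\,\Big[\prod_{i=n+1}^{2n}P_{\Lambda_i}(\lambda_{i+1})\Big]^{1/n};$$ (b) if $\beta\in(1,\infty)$: $$\Big[\prod_{i=n+1}^{2n}\sup_{\lambda\in\Lambda}|\lambda(r_i)|\Big]^{1/n}\le n^{-1/2}\,\|r_{n+1}\|_{\mathcal H_k}\,\Big[\prod_{i=n+1}^{2n}P_{\Lambda_i}(\lambda_{i+1})^{1/\beta}\Big]^{1/n}.$$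
   Context: $\mathcal H_k$ is the reproducing kernel Hilbert space of a kernel $k$; each $\lambda\in\mathcal H_k'$ has Riesz representer $v_\lambda$. For $\Lambda_i=\{\lambda_1,\dots,\lambda_i\}$ ($\Lambda_0=\emptyset$), $V(\Lambda_i)=\mathrm{span}\{v_\mu:\mu\in\Lambda_i\}$, $\Pi_{V(\Lambda_i)}$ the orthogonal projection, and $P_{\Lambda_i}(\lambda):=\|v_\lambda-\Pi_{V(\Lambda_i)}v_\lambda\|_{\mathcal H_k}$ the generalized power function. A PDE-$\beta$-greedy algorithm selects, for $\beta\in[0,\infty)$, $\lambda_{n+1}\in\arg\max_{\lambda\in\Lambda\setminus\Lambda_n,\ \lambda\neq0}|\lambda(u-\Pi_{V(\Lambda_n)}u)|^{\beta}\,P_{\Lambda_n}(\lambda)^{1-\beta}$, and for $\beta=\infty$, $\lambda_{n+1}\in\arg\max_{\lambda\in\Lambda\setminus\Lambda_n,\ \lambda\ne0}|\lambda(u-\Pi_{V(\Lambda_n)}u)|/P_{\Lambda_n}(\lambda)$ (maximizers assumed to exist). *)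

theory Defs
  imports "HOL-Analysis.Analysis"
begin

text \<open>Functionals lambda in the dual of the Hilbert space are represented by their
Riesz representers v_lambda, so that lambda(f) = v_lambda \<bullet> f.\<close>

definition orth_proj :: "'a::real_inner set \<Rightarrow> 'a \<Rightarrow> 'a" where
  "orth_proj S u = (THE p. p \<in> span S \<and> (\<forall>w\<in>span S. inner (u - p) w = 0))"

definition power_fun :: "'a::real_inner set \<Rightarrow> 'a \<Rightarrow> real" where
  "power_fun S v = norm (v - orth_proj S v)"

definition sel_set :: "(nat \<Rightarrow> 'a) \<Rightarrow> nat \<Rightarrow> 'a set" where
  "sel_set lam i = lam ` {1..i}"

definition resid :: "'a::real_inner \<Rightarrow> (nat \<Rightarrow> 'a) \<Rightarrow> nat \<Rightarrow> 'a" where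
  "resid u lam i = u - orth_proj (sel_set lam i) u"

text \<open>Selection criterion a^beta * p^(1-beta), with a^0 = 1 for beta = 0 and the
convention 0 * infinity = 0 (realised by 0 powr negative = 0).\<close>
definition greedy_crit :: "real \<Rightarrow> real \<Rightarrow> real \<Rightarrow> real" where
  "greedy_crit \<beta> a p = (if \<beta> = 0 then p else a powr \<beta> * p powr (1 - \<beta>))"

definition pde_beta_greedy :: "real \<Rightarrow> 'a::real_inner set \<Rightarrow> 'a \<Rightarrow> (nat \<Rightarrow> 'a) \<Rightarrow> bool" where
  "pde_beta_greedy \<beta> Lam u lam \<longleftrightarrow>
     (\<forall>n. lam (Suc n) \<in> Lam - sel_set lam n \<and> lam (Suc n) \<noteq> 0 \<and>
        (\<forall>v\<in>Lam - sel_set lam n. v \<noteq> 0 \<longrightarrow>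
           greedy_crit \<beta> \<bar>inner v (resid u lam n)\<bar> (power_fun (sel_set lam n) v)
           \<le> greedy_crit \<beta> \<bar>inner (lam (Suc n)) (resid u lam n)\<bar>
                (power_fun (sel_set lam n) (lam (Suc n)))))"

end

theory Submission
  imports Defs
begin


lemma orth_to_span:
  fixes y :: "'a::real_inner"
  assumes "\<forall>x\<in>S. inner y x = 0" "w \<in> span S"
  shows "inner y w = 0"
proof -
  have "subspace {w. inner y w = 0}"
    by (auto simp: subspace_def inner_add_right)
  then show ?thesis using assms span_induct[of w S "\<lambda>w. inner y w = 0"] by auto
qed

lemma proj_exists:
  fixes S :: "'a::real_inner set"
  assumes "finite S"
  shows "\<exists>p. p \<in> span S \<and> (\<forall>w\<in>span S. inner (u - p) w = 0)"
  using assms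
proof (induction S arbitrary: u rule: finite_induct)
  case empty
  then show ?case by (intro exI[of _ 0]) auto
next
  case (insert a S)
  obtain q where q: "q \<in> span S" "\<forall>w\<in>span S. inner (u - q) w = 0"
    using insert.IH by blast
  obtain qa where qa: "qa \<in> span S" "\<forall>w\<in>span S. inner (a - qa) w = 0"
    using insert.IH by blast
  show ?case
  proof (cases "a - qa = 0")
    case True
    then have "a \<in> span S" using qa by simp
    then have "span (insert a S) = span S" by (simp add: span_redundant)
    then show ?thesis using q by auto
  next
    case False
    define w where "w = a - qa"
    define c where "c = inner (u - q) w / inner w w"
    have ww: "inner w w \<noteq> 0" using False w_def by simp
    have sub: "span S \<subseteq> span (insert a S)" by (simp add: span_mono subset_insertI)
    have wsp: "w \<in> span (insert a S)"
      unfolding w_def using qa(1) sub by (meson insertI1 span_base span_diff subsetD)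
    have p_in: "q + c *\<^sub>R w \<in> span (insert a S)"
      using q(1) sub wsp by (meson span_add span_scale subsetD)
    have orthS: "\<forall>x\<in>span S. inner (u - (q + c *\<^sub>R w)) x = 0"
      using q(2) qa(2) by (auto simp: w_def inner_diff_left inner_add_left)
    have orthw: "inner (u - (q + c *\<^sub>R w)) w = 0"
      using ww by (simp add: c_def inner_diff_left inner_add_left)
    have "inner (u - (q + c *\<^sub>R w)) qa = 0" using orthS qa(1) by blast
    then have orta: "inner (u - (q + c *\<^sub>R w)) a = 0"
      using orthw by (simp add: w_def inner_diff_right)
    have "\<forall>x\<in>insert a S. inner (u - (q + c *\<^sub>R w)) x = 0"
      using orta orthS by (auto intro: span_base)
    then have "\<forall>x\<in>span (insert a S). inner (u - (q + c *\<^sub>R w)) x = 0"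
      using orth_to_span by blast
    then show ?thesis using p_in by blast
  qed
qed

lemma proj_unique:
  fixes S :: "'a::real_inner set"
  assumes "p \<in> span S" "\<forall>w\<in>span S. inner (u - p) w = 0"
    "q \<in> span S" "\<forall>w\<in>span S. inner (u - q) w = 0"
  shows "p = q"
proof -
  have d: "p - q \<in> span S" using assms by (simp add: span_diff)
  have "inner (p - q) (p - q) = inner (u - q) (p - q) - inner (u - p) (p - q)"
    by (simp add: inner_diff_left)
  also have "\<dots> = 0" using assms d by simp
  finally show ?thesis by simp
qed

lemma orth_proj:
  fixes S :: "'a::real_inner set"
  assumes "finite S"
  shows "orth_proj S u \<in> span S" "\<forall>w\<in>span S. inner (u - orth_proj S u) w = 0"
proof -
  have "\<exists>!p. p \<in> span S \<and> (\<forall>w\<in>span S. inner (u - p) w = 0)"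
    using proj_exists[OF assms] proj_unique by blast
  from theI'[OF this] show "orth_proj S u \<in> span S" "\<forall>w\<in>span S. inner (u - orth_proj S u) w = 0"
    unfolding orth_proj_def by auto
qed

lemma proj_min_sq:
  fixes S :: "'a::real_inner set"
  assumes "finite S" "p \<in> span S"
  shows "(norm (u - orth_proj S u))\<^sup>2 \<le> (norm (u - p))\<^sup>2"
proof -
  let ?P = "orth_proj S u"
  have d: "?P - p \<in> span S" using orth_proj[OF assms(1)] assms(2) by (simp add: span_diff)
  have o: "inner (u - ?P) (?P - p) = 0" using orth_proj(2)[OF assms(1)] d by blast
  have "u - p = (u - ?P) + (?P - p)" by simp
  then have "(norm (u - p))\<^sup>2 = (norm (u - ?P))\<^sup>2 + (norm (?P - p))\<^sup>2"
    using o by (metis norm_add_Pythagorean orthogonal_def)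
  then show ?thesis by simp
qed

lemma proj_min:
  fixes S :: "'a::real_inner set"
  assumes "finite S" "p \<in> span S"
  shows "norm (u - orth_proj S u) \<le> norm (u - p)"
  using power2_le_imp_le[OF proj_min_sq[OF assms] norm_ge_zero] .



lemma sel_fin: "finite (sel_set lam i)"
  by (simp add: sel_set_def)

lemma sel_Suc: "sel_set lam (Suc i) = insert (lam (Suc i)) (sel_set lam i)"
  by (auto simp: sel_set_def atLeastAtMostSuc_conv)

lemma sel_mono: "i \<le> j \<Longrightarrow> sel_set lam i \<subseteq> sel_set lam j"
  by (auto simp: sel_set_def)

lemma R1:
  fixes u :: "'a::real_inner"
  assumes "v \<in> span (sel_set lam i)"
  shows "inner v (resid u lam i) = 0"
  using orth_proj(2)[OF sel_fin, of lam i u] assms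
  by (simp add: resid_def inner_commute)

lemma R2:
  fixes u :: "'a::real_inner"
  shows "\<bar>inner v (resid u lam i)\<bar> \<le> norm (resid u lam i) * power_fun (sel_set lam i) v"
proof -
  have "inner (orth_proj (sel_set lam i) v) (resid u lam i) = 0"
    using R1 orth_proj(1)[OF sel_fin] by blast
  then have "inner v (resid u lam i) = inner (v - orth_proj (sel_set lam i) v) (resid u lam i)"
    by (simp add: inner_diff_left)
  also have "\<bar>\<dots>\<bar> \<le> norm (v - orth_proj (sel_set lam i) v) * norm (resid u lam i)"
    by (rule Cauchy_Schwarz_ineq2)
  finally show ?thesis by (simp add: power_fun_def mult.commute)
qed

lemma R3: "finite S \<Longrightarrow> power_fun S v \<le> norm v"
  unfolding power_fun_def using proj_min[of S 0 v] by (simp add: span_zero)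

lemma R4:
  fixes u :: "'a::real_inner"
  shows "norm (resid u lam (Suc i)) \<le> norm (resid u lam i)"
proof -
  have "orth_proj (sel_set lam i) u \<in> span (sel_set lam (Suc i))"
    using orth_proj(1)[OF sel_fin] span_mono[OF sel_mono[of i "Suc i" lam]] by auto
  then show ?thesis unfolding resid_def using proj_min[OF sel_fin] by blast
qed

lemma R4':
  fixes u :: "'a::real_inner"
  shows "i \<le> j \<Longrightarrow> norm (resid u lam j) \<le> norm (resid u lam i)"
proof (induction j rule: dec_induct)
  case base then show ?case by simp
next
  case (step j) then show ?case using R4[of u lam j] by linarith
qed

lemma R5:
  fixes u :: "'a::real_inner"
  shows "(inner (lam (Suc i)) (resid u lam i))\<^sup>2 \<le>
    (power_fun (sel_set lam i) (lam (Suc i)))\<^sup>2 *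
      ((norm (resid u lam i))\<^sup>2 - (norm (resid u lam (Suc i)))\<^sup>2)"
proof -
  define S where "S = sel_set lam i"
  define v where "v = lam (Suc i)"
  define w where "w = v - orth_proj S v"
  define r where "r = resid u lam i"
  define a where "a = inner v r"
  have fS: "finite S" using sel_fin S_def by simp
  have "inner (orth_proj S v) r = 0"
    using R1 orth_proj(1)[OF fS] S_def r_def by blast
  then have rw: "inner r w = a" by (simp add: w_def a_def inner_diff_right inner_commute)
  have dpos: "0 \<le> (norm r)\<^sup>2 - (norm (resid u lam (Suc i)))\<^sup>2"
    using R4[of u lam i] r_def by (simp add: power_mono)
  show ?thesis
  proof (cases "w = 0")
    case True
    then have "a = 0" using rw by simp
    then show ?thesis using dpos by (simp add: a_def v_def r_def)
  next
    case False
    define P where "P = norm w"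
    have Ppos: "P > 0" using False P_def by simp
    define c where "c = a / P\<^sup>2"
    have sub: "span S \<subseteq> span (sel_set lam (Suc i))"
      using span_mono[OF sel_mono[of i "Suc i" lam]] S_def by simp
    have vin: "v \<in> span (sel_set lam (Suc i))"
      by (simp add: sel_Suc v_def span_base)
    have win: "w \<in> span (sel_set lam (Suc i))"
      unfolding w_def using vin orth_proj(1)[OF fS] sub by (meson span_diff subsetD)
    have pin: "orth_proj S u + c *\<^sub>R w \<in> span (sel_set lam (Suc i))"
      using orth_proj(1)[OF fS, of u] sub win by (meson span_add span_scale subsetD)
    have "(norm (resid u lam (Suc i)))\<^sup>2 \<le> (norm (u - (orth_proj S u + c *\<^sub>R w)))\<^sup>2"
      unfolding resid_def by (rule proj_min_sq[OF sel_fin pin])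
    also have "u - (orth_proj S u + c *\<^sub>R w) = r - c *\<^sub>R w"
      by (simp add: r_def resid_def S_def)
    also have "(norm (r - c *\<^sub>R w))\<^sup>2 = (norm r)\<^sup>2 - 2 * c * a + c\<^sup>2 * P\<^sup>2"
      unfolding P_def power2_norm_eq_inner
      by (simp add: inner_diff_left inner_diff_right rw inner_commute[of w r] algebra_simps power2_eq_square)
    also have "\<dots> = (norm r)\<^sup>2 - a\<^sup>2 / P\<^sup>2"
      using Ppos by (simp add: c_def field_simps power2_eq_square)
    finally have "(norm (resid u lam (Suc i)))\<^sup>2 \<le> (norm r)\<^sup>2 - a\<^sup>2 / P\<^sup>2" .
    then have "a\<^sup>2 / P\<^sup>2 \<le> (norm r)\<^sup>2 - (norm (resid u lam (Suc i)))\<^sup>2" by linarith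
    then have "a\<^sup>2 \<le> P\<^sup>2 * ((norm r)\<^sup>2 - (norm (resid u lam (Suc i)))\<^sup>2)"
      using Ppos by (simp add: divide_le_eq mult.commute)
    then show ?thesis by (simp add: a_def P_def w_def power_fun_def S_def v_def r_def)
  qed
qed



lemma A_bound:
  fixes A P d :: real
  assumes "0 \<le> A" "0 \<le> P" "0 \<le> d" "A\<^sup>2 \<le> P\<^sup>2 * d" "0 < \<beta>"
  shows "A powr \<beta> \<le> P powr \<beta> * d powr (\<beta>/2)"
proof -
  have "A\<^sup>2 \<le> (P * sqrt d)\<^sup>2" using assms by (simp add: power_mult_distrib)
  then have "A \<le> P * sqrt d" using assms by (meson power2_le_imp_le mult_nonneg_nonneg real_sqrt_ge_zero)
  then have "A powr \<beta> \<le> (P * sqrt d) powr \<beta>" using assms by (simp add: powr_mono2)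
  also have "\<dots> = P powr \<beta> * (d powr (1/2)) powr \<beta>"
    using assms by (simp add: powr_mult powr_half_sqrt)
  also have "(d powr (1/2)) powr \<beta> = d powr (\<beta>/2)" by (simp add: powr_powr)
  finally show ?thesis .
qed

lemma L_a:
  fixes a p R A P d \<beta> :: real
  assumes b: "0 < \<beta>" "\<beta> \<le> 1" and "0 \<le> a" "a \<le> R * p" "0 \<le> p" "0 \<le> R" "0 \<le> P" "0 \<le> A"
    "A\<^sup>2 \<le> P\<^sup>2 * d" "0 \<le> d"
    and crit: "a > 0 \<Longrightarrow> a powr \<beta> * p powr (1-\<beta>) \<le> A powr \<beta> * P powr (1-\<beta>)"
  shows "a \<le> R powr (1-\<beta>) * P * d powr (\<beta>/2)"
proof (cases "a = 0")
  case True then show ?thesis using assms by simp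
next
  case False
  then have apos: "a > 0" using assms by simp
  then have Rp: "R * p > 0" using assms by linarith
  have "a = a powr \<beta> * a powr (1-\<beta>)" using apos by (simp flip: powr_add)
  also have "\<dots> \<le> a powr \<beta> * (R * p) powr (1-\<beta>)"
    using assms apos by (intro mult_left_mono powr_mono2) auto
  also have "\<dots> = R powr (1-\<beta>) * (a powr \<beta> * p powr (1-\<beta>))"
    using assms by (simp add: powr_mult)
  also have "\<dots> \<le> R powr (1-\<beta>) * (A powr \<beta> * P powr (1-\<beta>))"
    using crit[OF apos] by (intro mult_left_mono) auto
  finally have a1: "a \<le> R powr (1-\<beta>) * (A powr \<beta> * P powr (1-\<beta>))" .
  show ?thesis
  proof (cases "P = 0")
    case True
    then have "A = 0" using assms by simp
    then show ?thesis using a1 apos b by simp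
  next
    case False
    have "A powr \<beta> * P powr (1-\<beta>) \<le> P powr \<beta> * d powr (\<beta>/2) * P powr (1-\<beta>)"
      using A_bound assms by (intro mult_right_mono) auto
    also have "\<dots> = P * d powr (\<beta>/2)"
      using False assms by (simp add: mult.commute mult.left_commute flip: powr_add)
    finally have "A powr \<beta> * P powr (1-\<beta>) \<le> P * d powr (\<beta>/2)" .
    then have "R powr (1-\<beta>) * (A powr \<beta> * P powr (1-\<beta>)) \<le> R powr (1-\<beta>) * (P * d powr (\<beta>/2))"
      by (intro mult_left_mono) auto
    with a1 show ?thesis by (simp add: mult.assoc)
  qed
qed

lemma L_b:
  fixes a p R A P d \<beta> :: real
  assumes b: "1 < \<beta>" and "0 \<le> a" "a \<le> R * p" "0 \<le> p" "p \<le> 1" "0 \<le> R" "0 \<le> P" "0 \<le> A"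
    "A\<^sup>2 \<le> P\<^sup>2 * d" "0 \<le> d"
    and crit: "a > 0 \<Longrightarrow> a powr \<beta> * p powr (1-\<beta>) \<le> A powr \<beta> * P powr (1-\<beta>)"
  shows "a \<le> P powr (1/\<beta>) * sqrt d"
proof (cases "a = 0")
  case True then show ?thesis using assms by simp
next
  case False
  then have apos: "a > 0" using assms by simp
  then have ppos: "p > 0" using assms
    by (metis linorder_not_less mult_nonneg_nonpos order.antisym order_le_less_trans)
  have q1: "p powr (\<beta>-1) \<le> 1" using powr_mono2[of "\<beta>-1" p 1] assms by simp
  have q0: "p powr (\<beta>-1) > 0" using ppos by simp
  have "p powr (1-\<beta>) = 1 / p powr (\<beta>-1)"
    using ppos by (metis minus_diff_eq powr_minus_divide)
  then have pg: "1 \<le> p powr (1-\<beta>)" using q0 q1 by simp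
  have "a powr \<beta> \<le> a powr \<beta> * p powr (1-\<beta>)"
    using pg by (simp add: mult_le_cancel_left1)
  also have "\<dots> \<le> A powr \<beta> * P powr (1-\<beta>)" using crit[OF apos] .
  finally have a1: "a powr \<beta> \<le> A powr \<beta> * P powr (1-\<beta>)" .
  have Pne: "P \<noteq> 0"
  proof
    assume "P = 0"
    then have "a powr \<beta> \<le> 0" using a1 by simp
    then show False using apos by simp
  qed
  have "A powr \<beta> * P powr (1-\<beta>) \<le> P powr \<beta> * d powr (\<beta>/2) * P powr (1-\<beta>)"
    using A_bound assms by (intro mult_right_mono) auto
  also have "\<dots> = P * d powr (\<beta>/2)"
    using Pne assms by (simp add: mult.commute mult.left_commute flip: powr_add)
  finally have a2: "a powr \<beta> \<le> P * d powr (\<beta>/2)" using a1 by linarith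
  have "a = (a powr \<beta>) powr (1/\<beta>)" using apos b by (simp add: powr_powr)
  also have "\<dots> \<le> (P * d powr (\<beta>/2)) powr (1/\<beta>)"
    using a2 b by (intro powr_mono2) auto
  also have "\<dots> = P powr (1/\<beta>) * (d powr (\<beta>/2)) powr (1/\<beta>)"
    using assms by (simp add: powr_mult)
  also have "(d powr (\<beta>/2)) powr (1/\<beta>) = sqrt d"
    using b assms by (simp add: powr_powr powr_half_sqrt)
  finally show ?thesis .
qed



lemma crit_use:
  fixes u :: "'a::real_inner"
  assumes g: "pde_beta_greedy \<beta> Lam u lam" and v: "v \<in> Lam"
    and apos: "\<bar>inner v (resid u lam i)\<bar> > 0" and b: "\<beta> \<noteq> 0"
  shows "\<bar>inner v (resid u lam i)\<bar> powr \<beta> * power_fun (sel_set lam i) v powr (1-\<beta>)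
     \<le> \<bar>inner (lam (Suc i)) (resid u lam i)\<bar> powr \<beta> * power_fun (sel_set lam i) (lam (Suc i)) powr (1-\<beta>)"
proof -
  have "v \<notin> sel_set lam i" using apos R1[of v lam i u] span_base by fastforce
  moreover have "v \<noteq> 0" using apos by auto
  ultimately show ?thesis using g v b unfolding pde_beta_greedy_def greedy_crit_def by auto
qed

lemma crit_use0:
  fixes u :: "'a::real_inner"
  assumes g: "pde_beta_greedy 0 Lam u lam" and v: "v \<in> Lam"
    and apos: "\<bar>inner v (resid u lam i)\<bar> > 0"
  shows "power_fun (sel_set lam i) v \<le> power_fun (sel_set lam i) (lam (Suc i))"
proof -
  have "v \<notin> sel_set lam i" using apos R1[of v lam i u] span_base by fastforce
  moreover have "v \<noteq> 0" using apos by auto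
  ultimately show ?thesis using g v unfolding pde_beta_greedy_def greedy_crit_def by auto
qed

abbreviation "dd u lam i \<equiv> (norm (resid u lam i))\<^sup>2 - (norm (resid u lam (Suc i)))\<^sup>2"

lemma dd_nonneg: "0 \<le> dd u lam i"
  using R4[of u lam i] by (simp add: power_mono)

lemma Ba:
  fixes u :: "'a::real_inner"
  assumes g: "pde_beta_greedy \<beta> Lam u lam" and v: "v \<in> Lam" and b: "0 < \<beta>" "\<beta> \<le> 1"
  shows "\<bar>inner v (resid u lam i)\<bar> \<le> norm (resid u lam i) powr (1-\<beta>) *
     power_fun (sel_set lam i) (lam (Suc i)) * dd u lam i powr (\<beta>/2)"
proof (rule L_a[OF b, where R="norm (resid u lam i)"])
  show "\<bar>inner (lam (Suc i)) (resid u lam i)\<bar>\<^sup>2 \<le> (power_fun (sel_set lam i) (lam (Suc i)))\<^sup>2 * dd u lam i"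
    using R5[of lam i u] by simp
  show "0 < \<bar>inner v (resid u lam i)\<bar> \<Longrightarrow> \<bar>inner v (resid u lam i)\<bar> powr \<beta> * power_fun (sel_set lam i) v powr (1 - \<beta>)
    \<le> \<bar>inner (lam (Suc i)) (resid u lam i)\<bar> powr \<beta> * power_fun (sel_set lam i) (lam (Suc i)) powr (1 - \<beta>)"
    using crit_use[OF g v] b by auto
  show "\<bar>inner v (resid u lam i)\<bar> \<le> norm (resid u lam i) * power_fun (sel_set lam i) v" by (rule R2)
  show "0 \<le> dd u lam i" by (rule dd_nonneg)
qed (auto simp: power_fun_def)

lemma Bb:
  fixes u :: "'a::real_inner"
  assumes g: "pde_beta_greedy \<beta> Lam u lam" and v: "v \<in> Lam" and b: "1 < \<beta>"
    and n1: "norm v \<le> 1"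
  shows "\<bar>inner v (resid u lam i)\<bar> \<le>
     power_fun (sel_set lam i) (lam (Suc i)) powr (1/\<beta>) * sqrt (dd u lam i)"
proof (rule L_b[OF b, where R="norm (resid u lam i)"])
  show "\<bar>inner (lam (Suc i)) (resid u lam i)\<bar>\<^sup>2 \<le> (power_fun (sel_set lam i) (lam (Suc i)))\<^sup>2 * dd u lam i"
    using R5[of lam i u] by simp
  show "0 < \<bar>inner v (resid u lam i)\<bar> \<Longrightarrow> \<bar>inner v (resid u lam i)\<bar> powr \<beta> * power_fun (sel_set lam i) v powr (1 - \<beta>)
    \<le> \<bar>inner (lam (Suc i)) (resid u lam i)\<bar> powr \<beta> * power_fun (sel_set lam i) (lam (Suc i)) powr (1 - \<beta>)"
    using crit_use[OF g v] b by auto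
  show "power_fun (sel_set lam i) v \<le> 1" using R3[OF sel_fin, of lam i v] n1 by simp
  show "\<bar>inner v (resid u lam i)\<bar> \<le> norm (resid u lam i) * power_fun (sel_set lam i) v" by (rule R2)
  show "0 \<le> dd u lam i" by (rule dd_nonneg)
qed (auto simp: power_fun_def)

lemma B0:
  fixes u :: "'a::real_inner"
  assumes g: "pde_beta_greedy 0 Lam u lam" and v: "v \<in> Lam"
  shows "\<bar>inner v (resid u lam i)\<bar> \<le> norm (resid u lam i) * power_fun (sel_set lam i) (lam (Suc i))"
proof (cases "\<bar>inner v (resid u lam i)\<bar> > 0")
  case True
  have "\<bar>inner v (resid u lam i)\<bar> \<le> norm (resid u lam i) * power_fun (sel_set lam i) v" by (rule R2)
  also have "\<dots> \<le> norm (resid u lam i) * power_fun (sel_set lam i) (lam (Suc i))"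
    using crit_use0[OF g v True] by (intro mult_left_mono) auto
  finally show ?thesis .
next
  case False then show ?thesis by (simp add: power_fun_def)
qed

lemma SUP_bounds:
  fixes f :: "'b \<Rightarrow> real"
  assumes "x \<in> A" "\<And>v. v \<in> A \<Longrightarrow> f v \<le> B" "\<And>v. v \<in> A \<Longrightarrow> 0 \<le> f v"
  shows "(SUP v\<in>A. f v) \<le> B" "0 \<le> (SUP v\<in>A. f v)"
proof -
  show "(SUP v\<in>A. f v) \<le> B" using assms by (intro cSUP_least) auto
  have "bdd_above (f ` A)" by (rule bdd_aboveI2[where M=B]) (rule assms(2))
  then show "0 \<le> (SUP v\<in>A. f v)" using cSUP_upper2[of f A x 0] assms(1) assms(3)[OF assms(1)] by simp
qed



lemma final_gen:
  fixes s Q d :: "nat \<Rightarrow> real"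
  assumes fin: "finite I" and card: "card I = n" and n1: "n \<ge> 1"
    and s: "\<And>i. i \<in> I \<Longrightarrow> 0 \<le> s i \<and> s i \<le> C * Q i * d i powr \<gamma>"
    and C: "0 \<le> C" and Q: "\<And>i. i \<in> I \<Longrightarrow> 0 \<le> Q i" and d: "\<And>i. i \<in> I \<Longrightarrow> 0 \<le> d i"
    and g: "0 \<le> \<gamma>" and D: "(\<Prod>i\<in>I. d i) powr (1 / real n) \<le> D"
  shows "(\<Prod>i\<in>I. s i) powr (1 / real n) \<le> C * (\<Prod>i\<in>I. Q i) powr (1 / real n) * D powr \<gamma>"
proof -
  have "(\<Prod>i\<in>I. s i) \<le> (\<Prod>i\<in>I. C * Q i * d i powr \<gamma>)"
    using s by (intro prod_mono) auto
  also have "\<dots> = C ^ n * (\<Prod>i\<in>I. Q i) * (\<Prod>i\<in>I. d i) powr \<gamma>"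
    by (simp add: prod.distrib card prod_powr_distrib)
  finally have p1: "(\<Prod>i\<in>I. s i) \<le> C ^ n * (\<Prod>i\<in>I. Q i) * (\<Prod>i\<in>I. d i) powr \<gamma>" .
  have p0: "0 \<le> (\<Prod>i\<in>I. s i)" using s by (intro prod_nonneg) auto
  have "(\<Prod>i\<in>I. s i) powr (1 / real n) \<le> (C ^ n * (\<Prod>i\<in>I. Q i) * (\<Prod>i\<in>I. d i) powr \<gamma>) powr (1 / real n)"
    using p0 p1 by (intro powr_mono2) auto
  also have "\<dots> = (C ^ n) powr (1 / real n) * (\<Prod>i\<in>I. Q i) powr (1 / real n) *
      ((\<Prod>i\<in>I. d i) powr (1 / real n)) powr \<gamma>"
    by (simp add: powr_mult powr_powr mult.commute)
  also have "(C ^ n) powr (1 / real n) = C"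
  proof (cases "C = 0")
    case True then show ?thesis using n1 by simp
  next
    case False
    then have "C > 0" using C by simp
    then have "(C ^ n) powr (1 / real n) = (C powr real n) powr (1 / real n)" by (simp add: powr_realpow)
    also have "\<dots> = C" using n1 \<open>C > 0\<close> by (simp add: powr_powr)
    finally show ?thesis .
  qed
  also have "C * (\<Prod>i\<in>I. Q i) powr (1 / real n) * ((\<Prod>i\<in>I. d i) powr (1 / real n)) powr \<gamma>
      \<le> C * (\<Prod>i\<in>I. Q i) powr (1 / real n) * D powr \<gamma>"
    using C g D by (intro mult_left_mono powr_mono2) (auto intro: prod_nonneg d)
  finally show ?thesis .
qed

lemma telescope:
  fixes g :: "nat \<Rightarrow> real"
  shows "(\<Sum>i=n+1..2*n. g i - g (Suc i)) = g (n+1) - g (Suc (2*n))"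
proof -
  have "(\<Sum>i=n+1..2*n. (\<lambda>i. - g i) (Suc i) - (\<lambda>i. - g i) i) = (\<lambda>i. - g i) (Suc (2*n)) - (\<lambda>i. - g i) (n+1)"
    by (rule sum_Suc_diff) simp
  then show ?thesis by simp
qed

theorem theorem4p6:
  fixes u :: "'a::{real_inner, complete_space}" and Lam :: "'a set"
    and lam :: "nat \<Rightarrow> 'a" and \<beta> :: real and n :: nat
  assumes "\<forall>v\<in>Lam. norm v \<le> 1"
    and "\<beta> \<ge> 0"
    and "pde_beta_greedy \<beta> Lam u lam"
    and "n \<ge> 1"
  shows "(\<beta> \<le> 1 \<longrightarrow>
           (\<Prod>i=n+1..2*n. (SUP v\<in>Lam. \<bar>inner v (resid u lam i)\<bar>)) powr (1 / real n)
           \<le> real n powr (- \<beta> / 2) * norm (resid u lam (n+1)) *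
             (\<Prod>i=n+1..2*n. power_fun (sel_set lam i) (lam (i+1))) powr (1 / real n))
       \<and> (\<beta> > 1 \<longrightarrow>
           (\<Prod>i=n+1..2*n. (SUP v\<in>Lam. \<bar>inner v (resid u lam i)\<bar>)) powr (1 / real n)
           \<le> real n powr (- 1 / 2) * norm (resid u lam (n+1)) *
             (\<Prod>i=n+1..2*n. power_fun (sel_set lam i) (lam (i+1)) powr (1 / \<beta>)) powr (1 / real n))"
proof -
  note nrm = assms(1) and b0 = assms(2) and g = assms(3) and n1 = assms(4)
  define I where "I = {n+1..2*n}"
  define s where "s i = (SUP v\<in>Lam. \<bar>inner v (resid u lam i)\<bar>)" for i
  define R where "R = norm (resid u lam (n+1))"
  define P where "P i = power_fun (sel_set lam i) (lam (Suc i))" for i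
  have fin: "finite I" and card: "card I = n" by (auto simp: I_def)
  have Ine: "I \<noteq> {}" using n1 by (auto simp: I_def)
  have lam1: "lam 1 \<in> Lam" using g unfolding pde_beta_greedy_def by auto
  have Ri: "norm (resid u lam i) \<le> R" if "i \<in> I" for i
    using R4'[of "n+1" i u lam] that by (auto simp: I_def R_def)
  have P0: "0 \<le> P i" for i by (simp add: P_def power_fun_def)
  have s0: "0 \<le> s i" for i
    unfolding s_def
  proof (rule SUP_bounds(2)[OF lam1, where B="norm (resid u lam i)"])
    fix v assume v: "v \<in> Lam"
    have "\<bar>inner v (resid u lam i)\<bar> \<le> norm v * norm (resid u lam i)" by (rule Cauchy_Schwarz_ineq2)
    also have "\<dots> \<le> 1 * norm (resid u lam i)" using nrm v by (intro mult_right_mono) auto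
    finally show "\<bar>inner v (resid u lam i)\<bar> \<le> norm (resid u lam i)" by simp
  qed simp
  show ?thesis
  proof (cases "R = 0")
    case True
    have "s (n+1) \<le> 0"
      unfolding s_def
    proof (rule SUP_bounds(1)[OF lam1])
      fix v assume "v \<in> Lam"
      show "\<bar>inner v (resid u lam (n+1))\<bar> \<le> 0"
        using R2[of v u lam "n+1"] True by (simp add: R_def)
    qed auto
    then have "s (n+1) = 0" using s0[of "n+1"] by simp
    then have "(\<Prod>i\<in>I. s i) = 0" using fin n1 by (auto simp: I_def intro!: prod_zero bexI[of _ "n+1"])
    then show ?thesis using True n1 by (simp add: s_def I_def R_def)
  next
    case False
    then have Rpos: "R > 0" by (simp add: R_def)
    define d where "d i = dd u lam i" for i
    have d0: "0 \<le> d i" for i unfolding d_def by (rule dd_nonneg)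
    have "(\<Sum>i\<in>I. d i) = R\<^sup>2 - (norm (resid u lam (Suc (2*n))))\<^sup>2"
      unfolding I_def d_def R_def by (rule telescope)
    then have sumd: "(\<Sum>i\<in>I. d i) \<le> R\<^sup>2" by simp
    have "(\<Prod>i\<in>I. d i) powr (1 / real n) \<le> (\<Sum>i\<in>I. d i / card I)"
      using arith_geom_mean[OF fin Ine, of d] d0 card by simp
    also have "\<dots> = (\<Sum>i\<in>I. d i) / n" by (simp add: sum_divide_distrib card)
    also have "\<dots> \<le> R\<^sup>2 / n" using sumd by (simp add: divide_right_mono)
    finally have GD: "(\<Prod>i\<in>I. d i) powr (1 / real n) \<le> R\<^sup>2 / n" .
    have nR: "(R\<^sup>2 / n) powr (\<gamma>) = R powr (2*\<gamma>) * real n powr (- \<gamma>)" for \<gamma>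
    proof -
      have r2: "R\<^sup>2 = R powr 2" using Rpos by (simp add: powr_numeral)
      have "(R\<^sup>2 / n) powr \<gamma> = (R powr 2) powr \<gamma> / real n powr \<gamma>"
        unfolding r2 using Rpos by (intro powr_divide)
      also have "\<dots> = R powr (2*\<gamma>) * real n powr (- \<gamma>)"
        by (simp add: powr_powr powr_minus_divide divide_inverse)
      finally show ?thesis .
    qed
    have A: "(\<Prod>i\<in>I. s i) powr (1 / real n) \<le> real n powr (- \<beta> / 2) * R * (\<Prod>i\<in>I. P i) powr (1 / real n)" if b1: "\<beta> \<le> 1"
    proof (cases "\<beta> = 0")
      case True
      have "(\<Prod>i\<in>I. s i) powr (1 / real n) \<le> R * (\<Prod>i\<in>I. P i) powr (1 / real n) * 1 powr 1"
      proof (rule final_gen[OF fin card n1, where d="\<lambda>_. 1"])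
        fix i assume i: "i \<in> I"
        have "s i \<le> norm (resid u lam i) * P i"
        proof -
          have g0: "pde_beta_greedy 0 Lam u lam" using g True by simp
          show ?thesis unfolding s_def P_def by (rule SUP_bounds(1)[OF lam1 B0[OF g0]]) auto
        qed
        also have "\<dots> \<le> R * P i" using Ri[OF i] P0 by (simp add: mult_right_mono)
        finally show "0 \<le> s i \<and> s i \<le> R * P i * 1 powr 1" using s0 by simp
      qed (use Rpos P0 fin n1 in auto)
      then show ?thesis using True n1 by (simp add: mult.commute)
    next
      case False
      then have bpos: "0 < \<beta>" using b0 by simp
      have "(\<Prod>i\<in>I. s i) powr (1 / real n) \<le> R powr (1-\<beta>) * (\<Prod>i\<in>I. P i) powr (1 / real n) * (R\<^sup>2 / n) powr (\<beta>/2)"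
      proof (rule final_gen[OF fin card n1, where d=d])
        fix i assume i: "i \<in> I"
        have "s i \<le> norm (resid u lam i) powr (1-\<beta>) * P i * d i powr (\<beta>/2)"
          unfolding s_def P_def d_def by (rule SUP_bounds(1)[OF lam1 Ba[OF g _ bpos b1]]) auto
        also have "\<dots> \<le> R powr (1-\<beta>) * P i * d i powr (\<beta>/2)"
          using Ri[OF i] P0 b1 by (intro mult_right_mono powr_mono2) auto
        finally show "0 \<le> s i \<and> s i \<le> R powr (1-\<beta>) * P i * d i powr (\<beta>/2)" using s0 by simp
      qed (use Rpos P0 d0 b0 GD in auto)
      also have "\<dots> = R powr (1-\<beta>) * R powr \<beta> * real n powr (- \<beta> / 2) * (\<Prod>i\<in>I. P i) powr (1 / real n)"
        by (simp add: nR)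
      also have "R powr (1-\<beta>) * R powr \<beta> = R" using Rpos by (simp flip: powr_add)
      finally show ?thesis by (simp add: mult.commute mult.left_commute)
    qed
    have B: "(\<Prod>i\<in>I. s i) powr (1 / real n) \<le> real n powr (- 1 / 2) * R * (\<Prod>i\<in>I. P i powr (1/\<beta>)) powr (1 / real n)" if b1: "\<beta> > 1"
    proof -
      have "(\<Prod>i\<in>I. s i) powr (1 / real n) \<le> 1 * (\<Prod>i\<in>I. P i powr (1/\<beta>)) powr (1 / real n) * (R\<^sup>2 / n) powr (1/2)"
      proof (rule final_gen[OF fin card n1, where d=d])
        fix i assume i: "i \<in> I"
        have "s i \<le> P i powr (1/\<beta>) * sqrt (d i)"
          unfolding s_def P_def d_def by (rule SUP_bounds(1)[OF lam1 Bb[OF g _ b1]]) (use nrm in auto)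
        then show "0 \<le> s i \<and> s i \<le> 1 * P i powr (1/\<beta>) * d i powr (1/2)"
          using s0 d0 by (simp add: powr_half_sqrt)
      qed (use Rpos P0 d0 GD in auto)
      also have "\<dots> = R * real n powr (- 1 / 2) * (\<Prod>i\<in>I. P i powr (1/\<beta>)) powr (1 / real n)"
        using Rpos by (simp add: nR)
      finally show ?thesis by (simp add: mult.commute mult.left_commute)
    qed
    show ?thesis using A B by (simp add: s_def P_def I_def R_def)
  qed
qed


end
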